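(* Let $E^W_0=0$. The generating function for the expected number of napkinless diners under algorithm $W$ is \[ \sum_{n\ge 0}E^W_n z^n=\frac{z^3(2-z)}{2(1-z)^2(2+z)}, \] and for every $n\ge 0$, \[ E^W_{n+3}=\frac{(3n+7)2^{n-1}+(-1)^n}{9\cdot 2^n}. \]
   Context: Seating model. A circular table has $n\ge 1$ seats, with exactly one napkin between each pair of adjacent seats ($n$ napkins in total). "Left" and "right" are from the perspective of a seated diner. Diners $1,\dots,n$ arrive in this order and a maitre d' chooses a seat for each. A preference order is $\sigma=(\sigma_1,\dots,\sigma_n)\in\{-1,1\}^n$, where $\sigma_j=+1$ means diner $j$ prefers the napkin on their right and $\sigma_j=-1$ the napkin on their left. When diner $j$ is seated, they take their preferred adjacent napkin if it is still on the table; otherwise the other adjacent napkin if still on the table; otherwise they are napkinless. The maitre d' observes which napkin each seated diner takes. The "previous diner" means the most recently seated diner. Algorithm $W$ (trap setting). Seat diner 1; the primary direction $d\in\{\text{left},\text{right}\}$ is the side of the napkin diner 1 takes. All movement below is in direction $d$. (W1) If the two seats at distance 1 and 2 in direction $d$ from the previous diner's seat are both empty, go to W2; otherwise go to W4. (W2) If the previous diner took the napkin on their side $d$, seat the next diner two seats in direction $d$ from the previous diner and return to W1; otherwise go to W3. (W3) Seat the next diner one seat in direction $d$ from the previous diner and return to W1. (W4) Seat all remaining diners, one at a time in order of arrival, in the empty seats, in the order in which these seats are encountered moving in direction $d$ starting from diner 1's seat. For $n\ge1$, $\nu_W(\sigma)$ is the number of napkinless diners when the $n$ diners with preference order $\sigma$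 are seated at the circular table with $n$ seats by algorithm $W$, and $E^W_n=2^{-n}\sum_{\sigma\in\{-1,1\}^n}\nu_W(\sigma)$ is its expectation for uniformly random $\sigma$. *)

theory Defs
  imports "HOL-Analysis.Analysis" "HOL-Computational_Algebra.Formal_Power_Series"
begin

text \<open>Seats and napkins are numbered by residues mod n (integers in 0..n-1).
  Napkin i lies between seat i and seat i+1. For a diner at seat s, the napkin on
  the right (side +1) is napkin s, the napkin on the left (side -1) is napkin s-1;
  moving in direction +1 (right) from seat s leads to seat s+1, direction -1 to s-1.
  Preferences / sides / directions are encoded as the integers +1 (right) and -1 (left).\<close>

definition side_nap :: "nat \<Rightarrow> int \<Rightarrow> int \<Rightarrow> int" where
  "side_nap n s e = (if e = 1 then s mod int n else (s - 1) mod int n)"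

text \<open>Side of the napkin taken by a diner at seat s with preference e, given the
  set N of napkins still on the table; None = napkinless.\<close>
definition take_nap :: "nat \<Rightarrow> int set \<Rightarrow> int \<Rightarrow> int \<Rightarrow> int option" where
  "take_nap n N s e =
     (if side_nap n s e \<in> N then Some e
      else if side_nap n s (-e) \<in> N then Some (-e) else None)"

definition first_empty :: "nat \<Rightarrow> int \<Rightarrow> int set \<Rightarrow> int" where
  "first_empty n d occ = (d * int (LEAST k::nat. (d * int k) mod int n \<notin> occ)) mod int n"

text \<open>State: occupied seats, napkins on table, previous diner's seat, side of the
  napkin taken by the previous diner, whether step W4 has been reached, number
  of napkinless diners so far.\<close>
type_synonym wstate = "int set \<times> int set \<times> int \<times> int option \<times> bool \<times> nat"

fun runW :: "nat \<Rightarrow> int \<Rightarrow> wstate \<Rightarrow> int list \<Rightarrow> nat" where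
  "runW n d (occ, N, p, t, w4, c) [] = c"
| "runW n d (occ, N, p, t, w4, c) (e # es) =
     (let w4' = (w4 \<or> \<not> ((p + d) mod int n \<notin> occ \<and> (p + 2 * d) mod int n \<notin> occ));
          s = (if w4' then first_empty n d occ
               else if t = Some d then (p + 2 * d) mod int n else (p + d) mod int n);
          r = take_nap n N s e;
          N' = (case r of None \<Rightarrow> N | Some e' \<Rightarrow> N - {side_nap n s e'})
      in runW n d (insert s occ, N', s, r, w4', c + (if r = None then 1 else 0)) es)"

text \<open>Number of napkinless diners under algorithm W for preference order sigma
  (a list of length n over {-1,1}); diner 1 is seated at seat 0 and takes the
  preferred napkin, which fixes the primary direction d.\<close>
definition nuW :: "nat \<Rightarrow> int list \<Rightarrow> nat" where
  "nuW n \<sigma> = (case \<sigma> of [] \<Rightarrow> 0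
     | e1 # es \<Rightarrow> runW n e1 ({0}, {0..<int n} - {side_nap n 0 e1}, 0, Some e1, False, 0) es)"

definition prefs :: "nat \<Rightarrow> int list set" where
  "prefs n = {\<sigma>. length \<sigma> = n \<and> set \<sigma> \<subseteq> {-1, 1}}"

definition EW :: "nat \<Rightarrow> real" where
  "EW n = (if n = 0 then 0 else (\<Sum>\<sigma>\<in>prefs n. real (nuW n \<sigma>)) / 2 ^ n)"

end

theory Submission
  imports Defs
begin


definition Tr :: "nat \<Rightarrow> int set \<Rightarrow> int set \<Rightarrow> int set" where
  "Tr n occ N = {x \<in> {0..<int n} - occ. x \<notin> N \<and> (x - 1) mod int n \<notin> N}"

lemma m1: "0 \<le> (s::int) \<Longrightarrow> s < n \<Longrightarrow> (s - 1) mod n = (if s = 0 then n - 1 else s - 1)"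
proof -
  assume a: "0 \<le> s" "s < n"
  show ?thesis
  proof (cases "s = 0")
    case True
    have "(-1::int) mod n = n - 1" using a by (simp add: zmod_minus1)
    then show ?thesis using True by simp
  next
    case False
    then show ?thesis using a by simp
  qed
qed

lemma take_None:
  assumes "e \<in> {-1, 1}" "0 \<le> s" "s < int n"
  shows "(take_nap n N s e = None) = (s \<notin> N \<and> (s - 1) mod int n \<notin> N)"
  using assms by (auto simp: take_nap_def side_nap_def)

lemma take_Some:
  assumes "e \<in> {-1, 1}" "0 \<le> s" "s < int n" "take_nap n N s e = Some e'"
  shows "side_nap n s e' \<in> {s, (s - 1) mod int n}"
  using assms by (auto simp: take_nap_def side_nap_def split: if_splits)

lemma w4_run:
  assumes "n \<ge> 1" "occ \<subseteq> {0..<int n}" "length es = card ({0..<int n} - occ)" "set es \<subseteq> {-1,1}"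
    "\<forall>x\<in>{0..<int n}-occ. \<forall>y\<in>{0..<int n}-occ. x \<noteq> y \<longrightarrow> x \<noteq> (y - 1) mod int n"
    "w4 \<or> (p + 1) mod int n \<in> occ \<or> (p + 2) mod int n \<in> occ"
  shows "runW n 1 (occ, N, p, t, w4, c) es = c + card (Tr n occ N)"
  using assms
proof (induction es arbitrary: occ N p t w4 c)
  case Nil
  have "{0..<int n} - occ = {}" using Nil.prems(3) by simp
  then have "Tr n occ N = {}" unfolding Tr_def by blast
  then show ?case by simp
next
  case (Cons e es)
  define E where "E = {0..<int n} - occ"
  have fE: "finite E" unfolding E_def by simp
  have "card E = Suc (length es)" using Cons.prems(3) unfolding E_def by simp
  then obtain s0 where s0: "s0 \<in> E" by (metis card.empty ex_in_conv nat.distinct(1))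
  have ex: "\<exists>k::nat. int k mod int n \<notin> occ"
    by (rule exI[of _ "nat s0"]) (use s0 in \<open>auto simp: E_def\<close>)
  define K where "K = (LEAST k::nat. int k mod int n \<notin> occ)"
  have K: "int K mod int n \<notin> occ" unfolding K_def by (rule LeastI_ex[OF ex])
  define s where "s = int K mod int n"
  have sE: "s \<in> E" using K Cons.prems(1) unfolding s_def E_def by auto
  have s0n: "0 \<le> s" "s < int n" using sE unfolding E_def by auto
  have fe: "first_empty n 1 occ = s" unfolding first_empty_def s_def K_def by simp
  have e: "e \<in> {-1,1}" using Cons.prems(4) by simp
  define r where "r = take_nap n N s e"
  define N' where "N' = (case r of None \<Rightarrow> N | Some e' \<Rightarrow> N - {side_nap n s e'})"
  have step: "runW n 1 (occ, N, p, t, w4, c) (e # es) =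
     runW n 1 (insert s occ, N', s, r, True, c + (if r = None then 1 else 0)) es"
    using Cons.prems(6) by (simp add: fe r_def N'_def Let_def split: option.splits)
  have IH: "runW n 1 (insert s occ, N', s, r, True, c + (if r = None then 1 else 0)) es
     = c + (if r = None then 1 else 0) + card (Tr n (insert s occ) N')"
  proof (rule Cons.IH)
    show "insert s occ \<subseteq> {0..<int n}" using Cons.prems(2) s0n by auto
    have "{0..<int n} - insert s occ = E - {s}" unfolding E_def by auto
    then show "length es = card ({0..<int n} - insert s occ)"
      using sE fE \<open>card E = Suc (length es)\<close> by simp
    show "set es \<subseteq> {-1,1}" using Cons.prems(4) by simp
    show "\<forall>x\<in>{0..<int n}-insert s occ. \<forall>y\<in>{0..<int n}-insert s occ. x \<noteq> y \<longrightarrow> x \<noteq> (y - 1) mod int n"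
      using Cons.prems(5) by blast
  qed (use Cons.prems(1) in auto)
  have napE: "N' = N \<or> (\<exists>z\<in>{s, (s - 1) mod int n}. N' = N - {z})"
  proof (cases r)
    case None then show ?thesis unfolding N'_def by (intro disjI1) simp
  next
    case (Some e')
    have tk: "take_nap n N s e = Some e'" using Some unfolding r_def .
    have "side_nap n s e' \<in> {s, (s - 1) mod int n}" by (rule take_Some[OF e s0n tk])
    then show ?thesis unfolding N'_def Some by (intro disjI2 bexI[of _ "side_nap n s e'"]) simp_all
  qed
  have TrEq: "Tr n (insert s occ) N' = Tr n occ N - {s}"
  proof -
    have "\<And>x. x \<in> E \<Longrightarrow> x \<noteq> s \<Longrightarrow> (x \<in> N') = (x \<in> N) \<and> ((x - 1) mod int n \<in> N') = ((x - 1) mod int n \<in> N)"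
    proof -
      fix x assume x: "x \<in> E" "x \<noteq> s"
      have a1: "x \<noteq> (s - 1) mod int n" using Cons.prems(5)[rule_format, of x s] x sE unfolding E_def by auto
      have a2: "s \<noteq> (x - 1) mod int n" using Cons.prems(5)[rule_format, of s x] x sE unfolding E_def by auto
      have a3: "(x - 1) mod int n \<noteq> (s - 1) mod int n"
        using x s0n m1[of x "int n"] m1[of s "int n"] unfolding E_def by auto
      show "(x \<in> N') = (x \<in> N) \<and> ((x - 1) mod int n \<in> N') = ((x - 1) mod int n \<in> N)"
        using napE
      proof (elim disjE bexE)
        assume "N' = N" then show ?thesis by simp
      next
        fix z assume z: "z \<in> {s, (s - 1) mod int n}" "N' = N - {z}"
        have "z \<noteq> x" "z \<noteq> (x - 1) mod int n" using z(1) a1 a2 a3 x(2) by auto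
        then show ?thesis using z(2) by auto
      qed
    qed
    then show ?thesis unfolding Tr_def E_def by auto
  qed
  have sTr: "(s \<in> Tr n occ N) = (r = None)"
    using take_None[OF e s0n] sE unfolding Tr_def r_def E_def by auto
  have fT: "finite (Tr n occ N)" unfolding Tr_def by (rule finite_subset[of _ "{0..<int n}"]) auto
  have "card (Tr n occ N) = (if r = None then 1 else 0) + card (Tr n (insert s occ) N')"
  proof (cases "r = None")
    case True
    then have "s \<in> Tr n occ N" using sTr by simp
    then have "card (Tr n occ N) > 0" using fT card_gt_0_iff by blast
    then show ?thesis unfolding TrEq using True \<open>s \<in> Tr n occ N\<close> fT by (simp add: card_Diff_singleton)
  next
    case False
    then show ?thesis unfolding TrEq using sTr by simp
  qed
  then show ?case using step IH by simp
qed


fun S :: "nat \<Rightarrow> bool \<Rightarrow> int list \<Rightarrow> nat" where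
  "S m b [] = 0"
| "S m b (x # xs) = (if m < 2 then 0 else (if b \<and> x \<noteq> 1 then 1 else 0) + S (if b then m - 2 else m - 1) (x = 1) xs)"

lemma S_small: "m < 2 \<Longrightarrow> S m b xs = 0"
  by (cases xs) auto

lemma phase1:
  assumes "n \<ge> 1" "0 \<le> p" "p \<le> int n - 1" "occ \<subseteq> {0..p}" "0 \<in> occ" "p \<in> occ"
    "N \<subseteq> {0..<int n}" "{p+1..<int n} \<subseteq> N"
    "(t = Some 1) = b" "b \<longrightarrow> p \<notin> N" "\<not> b \<longrightarrow> p \<in> N"
    "\<forall>x. 0 < x \<and> x < p \<and> x \<notin> occ \<longrightarrow> x - 1 \<in> occ \<and> x + 1 \<in> occ"
    "length es = card ({0..<int n} - occ)" "set es \<subseteq> {-1,1}"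
  shows "runW n 1 (occ, N, p, t, False, c) es = c + card (Tr n occ N) + S (nat (int n - 1 - p)) b es"
  using assms
proof (induction es arbitrary: occ N p t b c)
  case Nil
  have "{0..<int n} - occ = {}" using Nil.prems(13) by simp
  then have "Tr n occ N = {}" unfolding Tr_def by blast
  then show ?case by simp
next
  case (Cons e es)
  note P = Cons.prems
  have e: "e \<in> {-1,1}" using P(14) by simp
  show ?case
  proof (cases "p \<le> int n - 3")
    case False
    have S0: "S (nat (int n - 1 - p)) b (e # es) = 0" using False by (intro S_small) simp
    have occn: "occ \<subseteq> {0..<int n}" using P(3,4) by auto
    have cond: "(p + 1) mod int n \<in> occ \<or> (p + 2) mod int n \<in> occ"
    proof (cases "p = int n - 1")
      case True then show ?thesis using P(5) by simp
    next
      case False2: False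
      then have "p = int n - 2" using False P(3) by simp
      then show ?thesis using P(5) by simp
    qed
    have nonadj: "\<forall>x\<in>{0..<int n}-occ. \<forall>y\<in>{0..<int n}-occ. x \<noteq> y \<longrightarrow> x \<noteq> (y - 1) mod int n"
    proof (intro ballI impI)
      fix x y assume x: "x \<in> {0..<int n}-occ" and y: "y \<in> {0..<int n}-occ" and xy: "x \<noteq> y"
      have x0: "x \<noteq> 0" "y \<noteq> 0" using x y P(5) by auto
      then have ym: "(y - 1) mod int n = y - 1" using y m1[of y "int n"] by auto
      show "x \<noteq> (y - 1) mod int n"
      proof
        assume "x = (y - 1) mod int n"
        then have xy1: "y = x + 1" using ym by simp
        show False
        proof (cases "x < p")
          case True
          then show False using P(12) x x0 xy1 y by auto
        next
          case False
          then have "x > p" using x P(6) by (cases "x = p") auto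
          then show False using xy1 y \<open>\<not> p \<le> int n - 3\<close> P(4) x by auto
        qed
      qed
    qed
    have "runW n 1 (occ, N, p, t, False, c) (e # es) = c + card (Tr n occ N)"
      by (rule w4_run) (use P(1,13,14) occn nonadj cond in auto)
    then show ?thesis using S0 by simp
  next
    case True
    define s where "s = (if b then p + 2 else p + 1)"
    define N' where "N' = (if e = 1 then N - {s} else N - {s - 1})"
    have sn: "0 \<le> s" "s < int n" "p < s" using True P(2) unfolding s_def by auto
    have p1: "(p + 1) mod int n = p + 1" "(p + 2) mod int n = p + 2" using True P(2) by auto
    have nocc: "p + 1 \<notin> occ" "p + 2 \<notin> occ" using P(4) by auto
    have smod: "(if t = Some 1 then (p + 2) mod int n else (p + 1) mod int n) = s"
      using p1 P(9) unfolding s_def by auto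
    have smm: "(s - 1) mod int n = s - 1" using m1[of s "int n"] sn P(2) by simp
    have tk: "take_nap n N s e = Some e"
    proof -
      have sN: "s \<in> N" using P(8) sn by auto
      have "p + 1 \<in> N" using subsetD[OF P(8), of "p+1"] True by auto
      moreover have "1 + p \<in> N" using subsetD[OF P(8), of "p+1"] True by (auto simp: add.commute)
      moreover have "s - 1 = (if b then p + 1 else p)" unfolding s_def by simp
      ultimately have "s - 1 \<in> N" using P(11) by (cases b) simp_all
      moreover have "(s - 1) mod int n = s - 1" using m1[of s "int n"] sn P(2) by simp
      ultimately show ?thesis using e sN unfolding take_nap_def side_nap_def using sn by auto
    qed
    have N'eq: "N - {side_nap n s e} = N'"
      using e sn smm unfolding N'_def side_nap_def by auto
    have step: "runW n 1 (occ, N, p, t, False, c) (e # es) = runW n 1 (insert s occ, N', s, Some e, False, c) es"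
    proof -
      have W: "(False \<or> \<not> ((p + 1) mod int n \<notin> occ \<and> (p + 2 * 1) mod int n \<notin> occ)) = False"
        using p1 nocc by simp
      have S: "(if t = Some 1 then (p + 2 * 1) mod int n else (p + 1) mod int n) = s"
        using smod by (cases "t = Some 1") simp_all
      show ?thesis by (simp only: runW.simps Let_def W if_False S) (simp add: tk N'eq)
    qed
    have IH: "runW n 1 (insert s occ, N', s, Some e, False, c) es
       = c + card (Tr n (insert s occ) N') + S (nat (int n - 1 - s)) (e = 1) es"
    proof (rule Cons.IH)
      show "0 \<le> s" "s \<le> int n - 1" using sn by auto
      show "insert s occ \<subseteq> {0..s}" using P(4) sn by auto
      show "0 \<in> insert s occ" "s \<in> insert s occ" using P(5) by auto
      show "N' \<subseteq> {0..<int n}" using P(7) unfolding N'_def by auto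
      show "{s + 1..<int n} \<subseteq> N'" using P(8) sn unfolding N'_def by auto
      show "(Some e = Some 1) = (e = 1)" by simp
      show "e = 1 \<longrightarrow> s \<notin> N'" unfolding N'_def by auto
      show "e \<noteq> 1 \<longrightarrow> s \<in> N'" using P(8) sn unfolding N'_def by auto
      show "\<forall>x. 0 < x \<and> x < s \<and> x \<notin> insert s occ \<longrightarrow> x - 1 \<in> insert s occ \<and> x + 1 \<in> insert s occ"
      proof (intro allI impI)
        fix x assume x: "0 < x \<and> x < s \<and> x \<notin> insert s occ"
        show "x - 1 \<in> insert s occ \<and> x + 1 \<in> insert s occ"
        proof (cases "x < p")
          case True then show ?thesis using P(12) x by auto
        next
          case False
          have xp: "x \<noteq> p" using x P(6) by auto
          have "x < p + 2" "b" using x P(6) False xp unfolding s_def by (auto split: if_splits)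
          then have "x = p + 1" "b" using False xp by auto
          then show ?thesis using P(6) unfolding s_def by auto
        qed
      qed
      have "{0..<int n} - insert s occ = ({0..<int n} - occ) - {s}" by auto
      moreover have "s \<in> {0..<int n} - occ" using sn P(4) by auto
      ultimately show "length es = card ({0..<int n} - insert s occ)"
        using P(13) by simp
      show "set es \<subseteq> {-1,1}" using P(14) by simp
    qed (use P(1) in auto)
    have TrEq: "Tr n (insert s occ) N' = Tr n occ N \<union> (if b \<and> e \<noteq> 1 then {p + 1} else {})"
    proof (rule set_eqI)
      fix x
      have N'sub: "N' \<subseteq> N" unfolding N'_def by auto
      show "x \<in> Tr n (insert s occ) N' \<longleftrightarrow> x \<in> Tr n occ N \<union> (if b \<and> e \<noteq> 1 then {p + 1} else {})"
      proof (cases "0 < x \<and> x < int n")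
        case False
        then have "x \<notin> Tr n (insert s occ) N'" "x \<notin> Tr n occ N" using P(5) unfolding Tr_def by auto
        moreover have "x \<noteq> p + 1" using False P(2) True by auto
        ultimately show ?thesis by auto
      next
        case xr: True
        have xm: "(x - 1) mod int n = x - 1" using m1[of x "int n"] xr by simp
        show ?thesis
        proof (cases "x \<le> p")
          case xp: True
          show ?thesis
          proof (cases "x = p")
            case True
            then show ?thesis using P(6) unfolding Tr_def by auto
          next
            case False
            then have "x < p" using xp by simp
            then have "x \<noteq> s" "x \<noteq> s - 1" "x - 1 \<noteq> s" "x - 1 \<noteq> s - 1" "x \<noteq> p + 1"
              using sn unfolding s_def by auto
            then have "(x \<in> N') = (x \<in> N)" "((x - 1) \<in> N') = ((x - 1) \<in> N)"
              unfolding N'_def by auto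
            then show ?thesis using \<open>x \<noteq> s\<close> \<open>x \<noteq> p + 1\<close> xm unfolding Tr_def by auto
          qed
        next
          case xp: False
          show ?thesis
          proof (cases "x = p + 1")
            case x1: True
            have xN: "x \<in> N" using P(8) xr xp by auto
            show ?thesis
            proof (cases b)
              case True
              then have ss: "s = p + 2" unfolding s_def by simp
              have "x - 1 = p" using x1 by simp
              then have "x - 1 \<notin> N'" "x - 1 \<notin> N" using P(10) True N'sub by auto
              moreover have "(x \<in> N') = (e = 1)" using xN ss x1 unfolding N'_def by auto
              moreover have "x \<notin> insert s occ" "x \<notin> occ" using ss x1 P(4) by auto
              ultimately show ?thesis using xm x1 xN True xr unfolding Tr_def by auto
            next
              case False
              then have "s = x" unfolding s_def using x1 by simp
              then show ?thesis using False xN unfolding Tr_def by auto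
            qed
          next
            case False
            then have xg: "x \<ge> p + 2" using xp by simp
            have xN: "x \<in> N" using P(8) xr xg by auto
            have "x \<in> N' \<or> x = s" using xN xg sn unfolding N'_def s_def by auto
            then show ?thesis using xN False unfolding Tr_def by auto
          qed
        qed
      qed
    qed
    have pTr: "p + 1 \<notin> Tr n occ N"
      using P(8) True unfolding Tr_def by auto
    have fT: "finite (Tr n occ N)" unfolding Tr_def by (rule finite_subset[of _ "{0..<int n}"]) auto
    have cardEq: "card (Tr n (insert s occ) N') = card (Tr n occ N) + (if b \<and> e \<noteq> 1 then 1 else 0)"
      unfolding TrEq using pTr fT by auto
    have m2: "nat (int n - 1 - p) \<ge> 2" using True by auto
    have Seq: "S (nat (int n - 1 - p)) b (e # es) = (if b \<and> e \<noteq> 1 then 1 else 0) + S (nat (int n - 1 - s)) (e = 1) es"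
    proof -
      have "nat (int n - 1 - s) = (if b then nat (int n - 1 - p) - 2 else nat (int n - 1 - p) - 1)"
        unfolding s_def using True by auto
      then show ?thesis using m2 by simp
    qed
    show ?thesis using step IH cardEq Seq by simp
  qed
qed



definition Rs :: "nat \<Rightarrow> int \<Rightarrow> int" where "Rs n s = (- s) mod int n"
definition RN :: "nat \<Rightarrow> int \<Rightarrow> int" where "RN n k = (- k - 1) mod int n"

fun Rst :: "nat \<Rightarrow> wstate \<Rightarrow> wstate" where
  "Rst n (occ, N, p, t, w4, c) = (Rs n ` occ, RN n ` N, Rs n p, map_option uminus t, w4, c)"

definition stepW :: "nat \<Rightarrow> int \<Rightarrow> wstate \<Rightarrow> int \<Rightarrow> wstate" where
  "stepW n d st e = (case st of (occ, N, p, t, w4, c) \<Rightarrow>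
     (let w4' = (w4 \<or> \<not> ((p + d) mod int n \<notin> occ \<and> (p + 2 * d) mod int n \<notin> occ));
          s = (if w4' then first_empty n d occ
               else if t = Some d then (p + 2 * d) mod int n else (p + d) mod int n);
          r = take_nap n N s e;
          N' = (case r of None \<Rightarrow> N | Some e' \<Rightarrow> N - {side_nap n s e'})
      in (insert s occ, N', s, r, w4', c + (if r = None then 1 else 0))))"

lemma runW_Cons: "runW n d st (e # es) = runW n d (stepW n d st e) es"
  by (cases st) (simp add: stepW_def Let_def)

lemma Rs_mod: "Rs n (a mod int n) = Rs n a"
  unfolding Rs_def by (simp add: mod_minus_eq)

lemma Rs_shift: "Rs n ((p + a) mod int n) = (Rs n p - a) mod int n"
  unfolding Rs_def by (simp add: mod_minus_eq mod_diff_left_eq)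

lemma Rs_range: "n \<ge> 1 \<Longrightarrow> Rs n x \<in> {0..<int n}"
  unfolding Rs_def by simp

lemma RN_range: "n \<ge> 1 \<Longrightarrow> RN n x \<in> {0..<int n}"
  unfolding RN_def by simp

lemma Rs_Rs: "x \<in> {0..<int n} \<Longrightarrow> Rs n (Rs n x) = x"
  unfolding Rs_def by (simp add: mod_minus_eq)

lemma RN_RN: "x \<in> {0..<int n} \<Longrightarrow> RN n (RN n x) = x"
proof -
  assume x: "x \<in> {0..<int n}"
  have "RN n (RN n x) = (- ((- x - 1) mod int n) - 1) mod int n" unfolding RN_def ..
  also have "\<dots> = (- (- x - 1) - 1) mod int n" by (metis mod_diff_left_eq mod_minus_eq)
  also have "\<dots> = x" using x by simp
  finally show ?thesis .
qed

lemma Rs_inj: "inj_on (Rs n) {0..<int n}"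
  by (rule inj_on_inverseI[where g = "Rs n"]) (rule Rs_Rs)

lemma RN_inj: "inj_on (RN n) {0..<int n}"
  by (rule inj_on_inverseI[where g = "RN n"]) (rule RN_RN)

lemma side_refl: "e \<in> {-1, 1} \<Longrightarrow> side_nap n (Rs n s) (- e) = RN n (side_nap n s e)"
proof -
  assume e: "e \<in> {-1, 1}"
  show ?thesis
  proof (cases "e = 1")
    case True
    have "((- s) mod int n - 1) mod int n = (- (s mod int n) - 1) mod int n"
      by (metis mod_diff_left_eq mod_minus_eq)
    then show ?thesis using True unfolding side_nap_def Rs_def RN_def by simp
  next
    case False
    then have "e = -1" using e by simp
    have "(- s) mod int n mod int n = (- ((s - 1) mod int n) - 1) mod int n"
    proof -
      have "(- ((s - 1) mod int n) - 1) mod int n = (- (s - 1) - 1) mod int n"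
        by (metis mod_diff_left_eq mod_minus_eq)
      then show ?thesis by simp
    qed
    then show ?thesis using \<open>e = -1\<close> unfolding side_nap_def Rs_def RN_def by simp
  qed
qed

lemma side_range: "n \<ge> 1 \<Longrightarrow> side_nap n s e \<in> {0..<int n}"
  unfolding side_nap_def by simp

lemma take_refl:
  assumes "n \<ge> 1" "N \<subseteq> {0..<int n}" "e \<in> {-1, 1}"
  shows "take_nap n (RN n ` N) (Rs n s) (- e) = map_option uminus (take_nap n N s e)"
proof -
  have e2: "- e \<in> {-1, 1}" using assms(3) by auto
  have m: "\<And>z. z \<in> {0..<int n} \<Longrightarrow> (RN n z \<in> RN n ` N) = (z \<in> N)"
    using inj_on_image_mem_iff[OF RN_inj _ assms(2)] by blast
  have a: "(side_nap n (Rs n s) (- e) \<in> RN n ` N) = (side_nap n s e \<in> N)"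
    unfolding side_refl[OF assms(3)] using m side_range[OF assms(1)] by blast
  have b: "(side_nap n (Rs n s) (- (- e)) \<in> RN n ` N) = (side_nap n s (- e) \<in> N)"
    unfolding side_refl[OF e2] using m side_range[OF assms(1)] by blast
  show ?thesis unfolding take_nap_def using a b by simp
qed

lemma FE_refl:
  assumes "n \<ge> 1" "occ \<subseteq> {0..<int n}"
  shows "Rs n (first_empty n (-1) occ) = first_empty n 1 (Rs n ` occ)"
proof -
  have m: "\<And>z. z \<in> {0..<int n} \<Longrightarrow> (Rs n z \<in> Rs n ` occ) = (z \<in> occ)"
    using inj_on_image_mem_iff[OF Rs_inj _ assms(2)] by blast
  have P: "\<And>k::nat. ((- 1 * int k) mod int n \<notin> occ) = ((1 * int k) mod int n \<notin> Rs n ` occ)"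
  proof -
    fix k :: nat
    have "Rs n ((- 1 * int k) mod int n) = (1 * int k) mod int n"
      unfolding Rs_def by (simp add: mod_minus_eq)
    moreover have "(- 1 * int k) mod int n \<in> {0..<int n}" using assms(1) by simp
    ultimately show "((- 1 * int k) mod int n \<notin> occ) = ((1 * int k) mod int n \<notin> Rs n ` occ)"
      using m by metis
  qed
  have L: "(LEAST k::nat. (- 1 * int k) mod int n \<notin> occ) = (LEAST k::nat. (1 * int k) mod int n \<notin> Rs n ` occ)"
    using P by presburger
  show ?thesis unfolding first_empty_def L[symmetric] Rs_def by (simp add: mod_minus_eq)
qed

lemma step_refl:
  assumes n1: "n \<ge> 1" and occ: "occ \<subseteq> {0..<int n}" and N: "N \<subseteq> {0..<int n}"
    and p: "p \<in> {0..<int n}" and e: "e \<in> {-1, 1}"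
  shows "Rst n (stepW n (-1) (occ, N, p, t, w4, c) e) = stepW n 1 (Rst n (occ, N, p, t, w4, c)) (- e)"
    and "case stepW n (-1) (occ, N, p, t, w4, c) e of (occ', N', p', t', w4', c') \<Rightarrow>
           occ' \<subseteq> {0..<int n} \<and> N' \<subseteq> {0..<int n} \<and> p' \<in> {0..<int n}"
proof -
  have mo: "\<And>z. z \<in> {0..<int n} \<Longrightarrow> (Rs n z \<in> Rs n ` occ) = (z \<in> occ)"
    using inj_on_image_mem_iff[OF Rs_inj _ occ] by blast
  define w4L where "w4L = (w4 \<or> \<not> ((p + - 1) mod int n \<notin> occ \<and> (p + 2 * - 1) mod int n \<notin> occ))"
  define sL where "sL = (if w4L then first_empty n (-1) occ else if t = Some (-1) then (p + 2 * -1) mod int n else (p + -1) mod int n)"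
  define rL where "rL = take_nap n N sL e"
  define NL where "NL = (case rL of None \<Rightarrow> N | Some e' \<Rightarrow> N - {side_nap n sL e'})"
  have L: "stepW n (-1) (occ, N, p, t, w4, c) e = (insert sL occ, NL, sL, rL, w4L, c + (if rL = None then 1 else 0))"
    unfolding stepW_def w4L_def sL_def rL_def NL_def Let_def by simp
  define w4R where "w4R = (w4 \<or> \<not> ((Rs n p + 1) mod int n \<notin> Rs n ` occ \<and> (Rs n p + 2 * 1) mod int n \<notin> Rs n ` occ))"
  define sR where "sR = (if w4R then first_empty n 1 (Rs n ` occ) else if map_option uminus t = Some 1 then (Rs n p + 2 * 1) mod int n else (Rs n p + 1) mod int n)"
  define rR where "rR = take_nap n (RN n ` N) sR (- e)"
  define NR where "NR = (case rR of None \<Rightarrow> RN n ` N | Some e' \<Rightarrow> RN n ` N - {side_nap n sR e'})"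
  have R: "stepW n 1 (Rst n (occ, N, p, t, w4, c)) (- e) = (insert sR (Rs n ` occ), NR, sR, rR, w4R, c + (if rR = None then 1 else 0))"
    unfolding stepW_def w4R_def sR_def rR_def NR_def Let_def by simp
  have r1: "Rs n ((p + - 1) mod int n) = (Rs n p + 1) mod int n" using Rs_shift[of n p "-1"] by simp
  have r2: "Rs n ((p + 2 * - 1) mod int n) = (Rs n p + 2 * 1) mod int n" using Rs_shift[of n p "-2"] by simp
  have W: "w4R = w4L"
    unfolding w4R_def w4L_def r1[symmetric] r2[symmetric] using mo n1 by simp
  have sLr: "sL \<in> {0..<int n}" unfolding sL_def first_empty_def using n1 by auto
  have tt: "(map_option uminus t = Some 1) = (t = Some (-1))" by (cases t) auto
  have Sx: "sR = Rs n sL"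
    unfolding sR_def sL_def W tt using FE_refl[OF n1 occ] r1 r2 by simp
  have Rr: "rR = map_option uminus rL" unfolding rR_def rL_def Sx using take_refl[OF n1 N e] .
  have NLs: "NL \<subseteq> {0..<int n}" unfolding NL_def using N by (auto split: option.splits)
  have NRx: "NR = RN n ` NL"
  proof (cases rL)
    case None
    then show ?thesis unfolding NR_def NL_def Rr by simp
  next
    case (Some e')
    have e': "e' \<in> {-1,1}" using Some e unfolding rL_def take_nap_def by (auto split: if_splits)
    have "RN n ` (N - {side_nap n sL e'}) = RN n ` N - RN n ` {side_nap n sL e'}"
      by (rule inj_on_image_set_diff[OF RN_inj]) (use N side_range[OF n1] in auto)
    then show ?thesis unfolding NR_def NL_def Rr Some Sx using side_refl[OF e', of n sL]
      by (simp add: side_refl[OF e'])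
  qed
  show "Rst n (stepW n (-1) (occ, N, p, t, w4, c) e) = stepW n 1 (Rst n (occ, N, p, t, w4, c)) (- e)"
    unfolding L R using W Sx Rr NRx by simp
  show "case stepW n (-1) (occ, N, p, t, w4, c) e of (occ', N', p', t', w4', c') \<Rightarrow>
           occ' \<subseteq> {0..<int n} \<and> N' \<subseteq> {0..<int n} \<and> p' \<in> {0..<int n}"
    unfolding L using occ NLs sLr by simp
qed

lemma run_refl:
  assumes "n \<ge> 1" "occ \<subseteq> {0..<int n}" "N \<subseteq> {0..<int n}" "p \<in> {0..<int n}" "set es \<subseteq> {-1, 1}"
  shows "runW n (-1) (occ, N, p, t, w4, c) es = runW n 1 (Rst n (occ, N, p, t, w4, c)) (map uminus es)"
  using assms
proof (induction es arbitrary: occ N p t w4 c)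
  case Nil
  then show ?case by simp
next
  case (Cons e es)
  have e: "e \<in> {-1,1}" using Cons.prems(5) by simp
  obtain occ' N' p' t' w4' c' where st: "stepW n (-1) (occ, N, p, t, w4, c) e = (occ', N', p', t', w4', c')"
    by (cases "stepW n (-1) (occ, N, p, t, w4, c) e") auto
  have g: "occ' \<subseteq> {0..<int n} \<and> N' \<subseteq> {0..<int n} \<and> p' \<in> {0..<int n}"
    using step_refl(2)[OF Cons.prems(1-4) e, of t w4 c] unfolding st by simp
  have "runW n (-1) (occ, N, p, t, w4, c) (e # es) = runW n (-1) (occ', N', p', t', w4', c') es"
    using runW_Cons st by metis
  also have "\<dots> = runW n 1 (Rst n (occ', N', p', t', w4', c')) (map uminus es)"
    using Cons.IH[of occ' N' p'] g Cons.prems by auto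
  also have "\<dots> = runW n 1 (stepW n 1 (Rst n (occ, N, p, t, w4, c)) (- e)) (map uminus es)"
    using step_refl(1)[OF Cons.prems(1-4) e, of t w4 c] unfolding st by simp
  also have "\<dots> = runW n 1 (Rst n (occ, N, p, t, w4, c)) (map uminus (e # es))"
    using runW_Cons by simp
  finally show ?case .
qed



fun ee :: "nat \<Rightarrow> bool \<Rightarrow> real" where
  "ee 0 b = 0"
| "ee (Suc 0) b = 0"
| "ee (Suc (Suc k)) True = 1/2 + (ee k True + ee k False) / 2"
| "ee (Suc (Suc k)) False = (ee (Suc k) True + ee (Suc k) False) / 2"

lemma nuW_pos:
  assumes n: "n \<ge> 1" and ys: "length ys = n - 1" "set ys \<subseteq> {-1, 1}"
  shows "nuW n (1 # ys) = S (n - 1) True ys"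
proof -
  have sn: "side_nap n 0 1 = 0" unfolding side_nap_def by simp
  define N where "N = {0..<int n} - {0}"
  have E: "{0..<int n} - {0} = {1..<int n}" by auto
  have "runW n 1 ({0}, N, 0, Some 1, False, 0) ys = 0 + card (Tr n {0} N) + S (nat (int n - 1 - 0)) True ys"
    by (rule phase1) (use n ys E in \<open>auto simp: N_def\<close>)
  moreover have "Tr n {0} N = {}" unfolding Tr_def N_def by auto
  moreover have "nat (int n - 1 - 0) = n - 1" using n by simp
  moreover have "nuW n (1 # ys) = runW n 1 ({0}, N, 0, Some 1, False, 0) ys"
    unfolding nuW_def N_def using sn by simp
  ultimately show ?thesis by simp
qed

lemma RN_img: "n \<ge> 1 \<Longrightarrow> RN n ` {0..<int n} = {0..<int n}"
proof
  assume n: "n \<ge> 1"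
  show "RN n ` {0..<int n} \<subseteq> {0..<int n}" using RN_range[OF n] by auto
  show "{0..<int n} \<subseteq> RN n ` {0..<int n}"
  proof
    fix y assume y: "y \<in> {0..<int n}"
    then have "y = RN n (RN n y)" using RN_RN by simp
    then show "y \<in> RN n ` {0..<int n}" using RN_range[OF n] by blast
  qed
qed

lemma nuW_neg:
  assumes n: "n \<ge> 1" and ys: "length ys = n - 1" "set ys \<subseteq> {-1, 1}"
  shows "nuW n ((-1) # ys) = S (n - 1) True (map uminus ys)"
proof -
  have sn: "side_nap n 0 (-1) = int n - 1" unfolding side_nap_def using n by (simp add: zmod_minus1)
  have "nuW n ((-1) # ys) = runW n (-1) ({0}, {0..<int n} - {int n - 1}, 0, Some (-1), False, 0) ys"
    unfolding nuW_def using sn by simp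
  also have "\<dots> = runW n 1 (Rst n ({0}, {0..<int n} - {int n - 1}, 0, Some (-1), False, 0)) (map uminus ys)"
    by (rule run_refl) (use n ys in auto)
  also have "Rst n ({0}, {0..<int n} - {int n - 1}, 0, Some (-1), False, 0) = ({0}, {0..<int n} - {side_nap n 0 1}, 0, Some 1, False, 0)"
  proof -
    have "RN n ` ({0..<int n} - {int n - 1}) = RN n ` {0..<int n} - RN n ` {int n - 1}"
      by (rule inj_on_image_set_diff[OF RN_inj]) (use n in auto)
    moreover have "RN n (int n - 1) = 0" unfolding RN_def by simp
    moreover have "side_nap n 0 1 = 0" unfolding side_nap_def by simp
    ultimately show ?thesis using RN_img[OF n] by (simp add: Rs_def)
  qed
  also have "runW n 1 ({0}, {0..<int n} - {side_nap n 0 1}, 0, Some 1, False, 0) (map uminus ys) = nuW n (1 # map uminus ys)"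
    unfolding nuW_def by simp
  also have "\<dots> = S (n - 1) True (map uminus ys)"
    by (rule nuW_pos) (use n ys in auto)
  finally show ?thesis .
qed

lemma finite_prefs: "finite (prefs L)"
proof -
  have "prefs L = {xs. set xs \<subseteq> {-1,1} \<and> length xs = L}" unfolding prefs_def by auto
  then show ?thesis using finite_lists_length_eq[of "{-1,1::int}" L] by simp
qed

lemma prefs_Suc: "prefs (Suc L) = Cons 1 ` prefs L \<union> Cons (-1) ` prefs L"
proof
  show "prefs (Suc L) \<subseteq> Cons 1 ` prefs L \<union> Cons (-1) ` prefs L"
  proof
    fix xs assume "xs \<in> prefs (Suc L)"
    then obtain x ys where xs: "xs = x # ys" "length ys = L" "x \<in> {-1,1}" "set ys \<subseteq> {-1,1}"
      unfolding prefs_def by (auto simp: length_Suc_conv)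
    then show "xs \<in> Cons 1 ` prefs L \<union> Cons (-1) ` prefs L" unfolding prefs_def by auto
  qed
  show "Cons 1 ` prefs L \<union> Cons (-1) ` prefs L \<subseteq> prefs (Suc L)" unfolding prefs_def by auto
qed

lemma sum_prefs_Suc:
  "(\<Sum>xs\<in>prefs (Suc L). (f xs :: real)) = (\<Sum>ys\<in>prefs L. f (1 # ys)) + (\<Sum>ys\<in>prefs L. f ((-1) # ys))"
proof -
  have d: "Cons 1 ` prefs L \<inter> Cons (-1) ` prefs L = {}" by auto
  have "(\<Sum>xs\<in>prefs (Suc L). f xs) = (\<Sum>xs\<in>Cons 1 ` prefs L. f xs) + (\<Sum>xs\<in>Cons (-1) ` prefs L. f xs)"
    unfolding prefs_Suc by (rule sum.union_disjoint) (use finite_prefs d in auto)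
  also have "\<dots> = (\<Sum>ys\<in>prefs L. f (1 # ys)) + (\<Sum>ys\<in>prefs L. f ((-1) # ys))"
    by (simp add: sum.reindex)
  finally show ?thesis .
qed

lemma prefs_0: "prefs 0 = {[]}" unfolding prefs_def by auto

lemma sumS: "m \<le> L \<Longrightarrow> (\<Sum>xs\<in>prefs L. real (S m b xs)) = 2 ^ L * ee m b"
proof (induction L arbitrary: m b)
  case 0
  then show ?case by (simp add: prefs_0)
next
  case (Suc L)
  show ?case
  proof (cases "m < 2")
    case True
    then have "ee m b = 0" by (cases m) (auto simp: numeral_2_eq_2 less_Suc_eq)
    then show ?thesis using True by (simp add: S_small)
  next
    case False
    then obtain k where k: "m = Suc (Suc k)" by (metis add_2_eq_Suc le_Suc_ex not_less)
    have "(\<Sum>xs\<in>prefs (Suc L). real (S m b xs)) = (\<Sum>ys\<in>prefs L. real (S m b (1 # ys))) + (\<Sum>ys\<in>prefs L. real (S m b ((-1) # ys)))"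
      by (rule sum_prefs_Suc)
    also have "\<dots> = (\<Sum>ys\<in>prefs L. real (S (if b then m - 2 else m - 1) True ys))
       + (\<Sum>ys\<in>prefs L. (if b then 1 else 0) + real (S (if b then m - 2 else m - 1) False ys))"
      using False by simp
    also have "\<dots> = 2 ^ L * ee (if b then m - 2 else m - 1) True + (2 ^ L * (if b then 1 else 0) + 2 ^ L * ee (if b then m - 2 else m - 1) False)"
    proof -
      have le: "(if b then m - 2 else m - 1) \<le> L" using Suc.prems False by auto
      have c: "card (prefs L) = 2 ^ L"
      proof -
        have "prefs L = {xs. set xs \<subseteq> {-1,1::int} \<and> length xs = L}" unfolding prefs_def by auto
        then have "card (prefs L) = card {-1,1::int} ^ L" using card_lists_length_eq[of "{-1,1::int}" L] by simp
        moreover have "card {-1,1::int} = 2" by simp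
        ultimately show ?thesis by simp
      qed
      show ?thesis using Suc.IH[OF le] c by (simp add: sum.distrib)
    qed
    also have "\<dots> = 2 ^ Suc L * ee m b"
      unfolding k by (cases b) (simp_all add: field_simps)
    finally show ?thesis .
  qed
qed

lemma EW_ee: "EW n = (if n = 0 then 0 else ee (n-1) True)"
proof (cases n)
  case 0
  then show ?thesis unfolding EW_def by simp
next
  case (Suc L)
  have n1: "n \<ge> 1" using Suc by simp
  have "(\<Sum>\<sigma>\<in>prefs n. real (nuW n \<sigma>)) = (\<Sum>ys\<in>prefs L. real (nuW n (1 # ys))) + (\<Sum>ys\<in>prefs L. real (nuW n ((-1) # ys)))"
    unfolding Suc by (rule sum_prefs_Suc)
  also have "\<dots> = (\<Sum>ys\<in>prefs L. real (S L True ys)) + (\<Sum>ys\<in>prefs L. real (S L True (map uminus ys)))"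
  proof -
    have "\<And>ys. ys \<in> prefs L \<Longrightarrow> nuW n (1 # ys) = S L True ys"
      using nuW_pos[OF n1] Suc unfolding prefs_def by auto
    moreover have "\<And>ys. ys \<in> prefs L \<Longrightarrow> nuW n ((-1) # ys) = S L True (map uminus ys)"
      using nuW_neg[OF n1] Suc unfolding prefs_def by auto
    ultimately show ?thesis by simp
  qed
  also have "(\<Sum>ys\<in>prefs L. real (S L True (map uminus ys))) = (\<Sum>ys\<in>prefs L. real (S L True ys))"
    by (rule sum.reindex_bij_witness[of _ "map uminus" "map uminus"]) (auto simp: prefs_def o_def)
  also have "(\<Sum>ys\<in>prefs L. real (S L True ys)) = 2 ^ L * ee L True" by (rule sumS) simp
  finally show ?thesis unfolding EW_def Suc by simp
qed

lemma ee_closed: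
  "m \<ge> 1 \<Longrightarrow> ee m True = (3 * real m + 1) / 18 + 4/9 * (-1/2) ^ m
     \<and> ee m False = real m / 6 - 5/18 - 2/9 * (-1/2) ^ m"
proof (induction m rule: less_induct)
  case (less m)
  show ?case
  proof (cases "m \<le> 2")
    case True
    then have "m = 1 \<or> m = 2" using less.prems by auto
    then show ?thesis by (auto simp: numeral_2_eq_2)
  next
    case False
    define k where "k = m - 2"
    have k: "m = Suc (Suc k)" "k \<ge> 1" using False unfolding k_def by auto
    define y where "y = (-1/2::real) ^ k"
    have IH1: "ee k True = (3 * real k + 1) / 18 + 4/9 * y
     \<and> ee k False = real k / 6 - 5/18 - 2/9 * y" using less.IH[of k] k unfolding y_def by auto
    have IH2: "ee (Suc k) True = (3 * real k + 4) / 18 + 4/9 * (y * (-1/2))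
     \<and> ee (Suc k) False = (real k + 1) / 6 - 5/18 - 2/9 * (y * (-1/2))" using less.IH[of "Suc k"] k unfolding y_def by (auto simp: field_simps)
    have yy: "(-1/2::real) ^ m = y * (1/4)" unfolding k y_def by (simp add: field_simps)
    have e1: "ee m True = 1/2 + (ee k True + ee k False)/2" unfolding k by simp
    have e2: "ee m False = (ee (Suc k) True + ee (Suc k) False)/2" unfolding k by simp
    have rm: "real m = real k + 2" unfolding k by simp
    show ?thesis unfolding yy e1 e2 rm using IH1 IH2 by (simp add: field_simps)
  qed
qed

lemma EW_closed: "k \<ge> 2 \<Longrightarrow> EW k = (3 * real k - 2) / 18 + 4/9 * (-1/2) ^ (k - 1)"
proof -
  assume k: "k \<ge> 2"
  then have "EW k = ee (k-1) True" by (simp add: EW_ee)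
  also have "\<dots> = (3 * real (k-1) + 1) / 18 + 4/9 * (-1/2) ^ (k-1)" using ee_closed[of "k-1"] k by auto
  also have "\<dots> = (3 * real k - 2) / 18 + 4/9 * (-1/2) ^ (k - 1)" using k by (simp add: of_nat_diff)
  finally show ?thesis .
qed

lemma EW_small: "EW 0 = 0" "EW 1 = 0" "EW 2 = 0" "EW 3 = 1/2" "EW 4 = 1/2"
  by (simp_all add: EW_ee numeral_eq_Suc)

lemma den: "(2 * (1 - fps_X) ^ 2 * (2 + fps_X) :: real fps) = 4 - 6 * fps_X + 2 * fps_X ^ 3"
  by (simp add: algebra_simps power2_eq_square power3_eq_cube)

lemma num: "(fps_X ^ 3 * (2 - fps_X) :: real fps) = 2 * fps_X ^ 3 - fps_X ^ 4"
  by algebra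

lemma prod_eq: "Abs_fps EW * (4 - 6 * fps_X + 2 * fps_X ^ 3) = 2 * fps_X ^ 3 - (fps_X ^ 4 :: real fps)"
proof (rule fps_ext)
  fix k
  have L: "fps_nth (Abs_fps EW * (4 - 6 * fps_X + 2 * fps_X ^ 3)) k
      = 4 * EW k - 6 * (if k < 1 then 0 else EW (k-1)) + 2 * (if k < 3 then 0 else EW (k-3))"
  proof -
    have "Abs_fps EW * (4 - 6 * fps_X + 2 * fps_X ^ 3) = 4 * Abs_fps EW - 6 * (fps_X^1 * Abs_fps EW) + 2 * (fps_X ^ 3 * Abs_fps EW)"
      by (simp add: algebra_simps)
    then show ?thesis by (simp add: fps_X_power_mult_nth numeral_fps_const del: power_one_right)
  qed
  have R: "fps_nth (2 * fps_X ^ 3 - (fps_X ^ 4 :: real fps)) k = (if k = 3 then 2 else if k = 4 then -1 else 0)"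
    by (simp add: numeral_fps_const)
  show "fps_nth (Abs_fps EW * (4 - 6 * fps_X + 2 * fps_X ^ 3)) k = fps_nth (2 * fps_X ^ 3 - (fps_X ^ 4 :: real fps)) k"
  proof (cases "k < 5")
    case True
    then have "k = 0 \<or> k = 1 \<or> k = 2 \<or> k = 3 \<or> k = 4" by auto
    moreover have "EW (Suc 0) = 0" using EW_small by simp
    ultimately show ?thesis unfolding L R by (auto simp: EW_small)
  next
    case False
    then obtain j where j: "k = j + 5" by (metis add.commute le_Suc_ex not_less)
    define x where "x = (-1/2::real) ^ (j + 1)"
    have p3: "(-1/2::real) ^ (j + 3) = x * (1/4)" unfolding x_def
      by (simp add: power_add eval_nat_numeral)
    have p4: "(-1/2::real) ^ (j + 4) = x * (-1/8)" unfolding x_def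
      by (simp add: power_add eval_nat_numeral)
    have a: "EW k = (3 * real j + 13) / 18 + 4/9 * (-1/2) ^ (j + 4)"
    proof -
      have "EW k = (3 * real k - 2) / 18 + 4/9 * (-1/2) ^ (k - 1)" using EW_closed[of k] j by simp
      moreover have "k - 1 = j + 4" "real k = real j + 5" using j by auto
      ultimately show ?thesis by simp
    qed
    have b: "EW (k-1) = (3 * real j + 10) / 18 + 4/9 * (-1/2) ^ (j + 3)"
    proof -
      have "EW (k-1) = (3 * real (k-1) - 2) / 18 + 4/9 * (-1/2) ^ (k - 1 - 1)" using EW_closed[of "k-1"] j by simp
      moreover have "k - 1 - 1 = j + 3" "real (k-1) = real j + 4" using j by auto
      ultimately show ?thesis by simp
    qed
    have c: "EW (k-3) = (3 * real j + 4) / 18 + 4/9 * (-1/2) ^ (j + 1)"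
    proof -
      have "EW (k-3) = (3 * real (k-3) - 2) / 18 + 4/9 * (-1/2) ^ (k - 3 - 1)" using EW_closed[of "k-3"] j by simp
      moreover have "k - 3 - 1 = j + 1" "real (k-3) = real j + 2" using j by auto
      ultimately show ?thesis by simp
    qed
    have lhs: "fps_nth (Abs_fps EW * (4 - 6 * fps_X + 2 * fps_X ^ 3)) k = 4 * EW k - 6 * EW (k-1) + 2 * EW (k-3)"
      using L j by simp
    have rhs: "fps_nth (2 * fps_X ^ 3 - (fps_X ^ 4 :: real fps)) k = 0" using R j by simp
    have "4 * EW k - 6 * EW (k-1) + 2 * EW (k-3) = 0" unfolding a b c p3 p4 x_def[symmetric] by (simp add: field_simps)
    then show ?thesis using lhs rhs by simp
  qed
qed

theorem proposition4:
  shows "Abs_fps EW = fps_X ^ 3 * (2 - fps_X) / (2 * (1 - fps_X) ^ 2 * (2 + fps_X))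
         \<and> (\<forall>n::nat. EW (n + 3) =
              ((3 * real n + 7) * 2 powi (int n - 1) + (-1) ^ n) / (9 * 2 ^ n))"
proof
  let ?D = "4 - 6 * fps_X + 2 * fps_X ^ 3 :: real fps"
  have D0: "fps_nth ?D 0 \<noteq> 0" by (simp add: numeral_fps_const)
  have "fps_X ^ 3 * (2 - fps_X) / (2 * (1 - fps_X) ^ 2 * (2 + fps_X)) = (Abs_fps EW * ?D) / ?D"
    unfolding den num prod_eq ..
  also have "\<dots> = Abs_fps EW * ?D * inverse ?D" by (rule fps_divide_unit[OF D0])
  also have "\<dots> = Abs_fps EW" by (simp only: mult.assoc inverse_mult_eq_1'[OF D0] mult_1_right)
  finally show "Abs_fps EW = fps_X ^ 3 * (2 - fps_X) / (2 * (1 - fps_X) ^ 2 * (2 + fps_X))" by (rule sym)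
next
  show "\<forall>n::nat. EW (n + 3) = ((3 * real n + 7) * 2 powi (int n - 1) + (-1) ^ n) / (9 * 2 ^ n)"
  proof
    fix n :: nat
    have p: "(2::real) powi (int n - 1) = 2 ^ n / 2"
      by (simp add: power_int_diff)
    have "EW (n + 3) = (3 * real (n + 3) - 2) / 18 + 4/9 * (-1/2) ^ (n + 3 - 1)"
      using EW_closed[of "n+3"] by simp
    also have "\<dots> = (3 * real n + 7) / 18 + 4/9 * (-1/2) ^ (n + 2)"
      by simp
    also have "\<dots> = ((3 * real n + 7) * 2 powi (int n - 1) + (-1) ^ n) / (9 * 2 ^ n)"
    proof -
      have h: "(-1/2::real) ^ n = (-1) ^ n / 2 ^ n"
        by (metis power_divide)
      have a: "(-1/2::real) ^ (n + 2) = (-1) ^ n / 2 ^ n / 4" unfolding power_add h by (simp add: eval_nat_numeral)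
      have z: "(2::real) ^ n > 0" by simp
      show ?thesis unfolding a p using z by (simp add: field_simps)
    qed
    finally show "EW (n + 3) = ((3 * real n + 7) * 2 powi (int n - 1) + (-1) ^ n) / (9 * 2 ^ n)" .
  qed
qed

end
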